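(* For all $\bar s\in\mathbb{R}^{mn}$, $$\bar s^T\bar f(\bar s)\ \ge\ 2\,\bar f(\bar s)^T\bar f(\bar s)\ \ge\ 0 .$$
   Context: Let $n\ge1$, $m\ge2$. For $s\in\mathbb{R}^{mn}$ write $s=(s_{11},\dots,s_{1m},\dots,s_{n1},\dots,s_{nm})^T$. Define $f:\mathbb{R}^{mn}\to\mathbb{R}^{mn}$ by $f_{ij}(s)=e^{s_{ij}}/\sum_{l=1}^m e^{s_{il}}$ and $\bar f(s)=f(s)-\frac1m\mathbf 1_{mn}$, where $\mathbf 1_{mn}$ is the all-ones vector. *)

theory Defs
  imports Complex_Main
begin

text \<open>A vector s in R^(mn) is represented by its entries s i j (row i < n, column j < m,
  0-based indices). Entries outside the ranges are irrelevant.\<close>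

definition softmax :: "nat \<Rightarrow> (nat \<Rightarrow> nat \<Rightarrow> real) \<Rightarrow> nat \<Rightarrow> nat \<Rightarrow> real" where
  "softmax m s i j = exp (s i j) / (\<Sum>l<m. exp (s i l))"

definition fbar :: "nat \<Rightarrow> (nat \<Rightarrow> nat \<Rightarrow> real) \<Rightarrow> nat \<Rightarrow> nat \<Rightarrow> real" where
  "fbar m s i j = softmax m s i j - 1 / real m"

end

theory Submission
  imports Defs
begin

lemma key1: fixes d :: real assumes "d \<ge> 0" shows "d * (exp d + 1) \<ge> 2 * (exp d - 1)"
proof -
  let ?g = "\<lambda>d::real. d * (exp d + 1) - 2 * (exp d - 1)"
  have der: "\<And>x. (?g has_real_derivative (exp x + 1 + x * exp x - 2 * exp x)) (at x)"
    by (auto intro!: derivative_eq_intros)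
  have nn: "exp x + 1 + x * exp x - 2 * exp x \<ge> 0" if "0 \<le> x" for x :: real
  proof -
    have "exp (-x) \<ge> 1 + (-x)" by (rule exp_ge_add_one_self)
    hence "exp x * exp (-x) \<ge> exp x * (1 - x)" by (intro mult_left_mono) auto
    hence "1 \<ge> exp x * (1 - x)" by (simp add: exp_minus field_simps)
    thus ?thesis by (simp add: algebra_simps)
  qed
  have "?g 0 \<le> ?g d"
    by (rule DERIV_nonneg_imp_nondecreasing[of 0 d ?g]) (use assms der nn in blast)+
  thus ?thesis by simp
qed

lemma key2: fixes a b :: real
  shows "(a - b) * (exp a - exp b) * (exp a + exp b) \<ge> 2 * (exp a - exp b)^2"
proof -
  have gen: "(a - b) * (exp a - exp b) * (exp a + exp b) \<ge> 2 * (exp a - exp b)^2" if "b \<le> a" for a b :: real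
  proof -
    have k: "(a-b) * (exp (a-b) + 1) \<ge> 2 * (exp (a-b) - 1)" using key1 that by simp
    have ea: "exp a = exp (a-b) * exp b" by (simp add: exp_diff)
    have "(a - b) * (exp a - exp b) * (exp a + exp b) = exp b * exp b * (exp (a-b) - 1) * ((a-b) * (exp (a-b) + 1))"
      unfolding ea by (simp add: algebra_simps)
    also have "\<dots> \<ge> exp b * exp b * (exp (a-b) - 1) * (2 * (exp (a-b) - 1))"
      using k that by (intro mult_left_mono) auto
    finally show ?thesis unfolding ea by (simp add: algebra_simps power2_eq_square)
  qed
  show ?thesis
  proof (cases "b \<le> a")
    case True thus ?thesis using gen by blast
  next
    case False
    have "(b - a) * (exp b - exp a) * (exp b + exp a) \<ge> 2 * (exp b - exp a)^2" using gen[of a b] False by simp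
    thus ?thesis by (simp add: algebra_simps power2_eq_square)
  qed
qed

lemma row: fixes x p :: "nat \<Rightarrow> real" and m :: nat
  assumes m: "m > 0" and sp: "(\<Sum>j<m. p j) = 1"
    and pw: "\<And>j k. j < m \<Longrightarrow> k < m \<Longrightarrow> (x j - x k) * (p j - p k) \<ge> 2 * (p j - p k)^2"
  shows "(\<Sum>j<m. x j * (p j - 1 / real m)) \<ge> 2 * (\<Sum>j<m. (p j - 1 / real m)^2)"
proof -
  have A: "(\<Sum>j<m. \<Sum>k<m. (x j - x k) * (p j - p k)) = 2 * real m * (\<Sum>j<m. x j * (p j - 1 / real m))"
  proof -
    have "(\<Sum>j<m. \<Sum>k<m. (x j - x k) * (p j - p k)) = (\<Sum>j<m. \<Sum>k<m. x j * p j - x j * p k - x k * p j + x k * p k)"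
      by (simp add: algebra_simps)
    also have "\<dots> = 2 * real m * (\<Sum>j<m. x j * p j) - 2 * (\<Sum>j<m. x j) * (\<Sum>j<m. p j)"
    proof -
      have e1: "(\<Sum>j<m. \<Sum>k<m. x j * p k) = (\<Sum>j<m. x j) * (\<Sum>j<m. p j)"
        by (rule sum_product[symmetric])
      have e2: "(\<Sum>j<m. \<Sum>k<m. x k * p j) = (\<Sum>j<m. x j) * (\<Sum>j<m. p j)"
      proof -
        have "(\<Sum>j<m. \<Sum>k<m. x k * p j) = (\<Sum>k<m. \<Sum>j<m. x k * p j)" by (rule sum.swap)
        thus ?thesis by (simp add: sum_product)
      qed
      have e3: "(\<Sum>j<m. \<Sum>k<m. x j * p j) = real m * (\<Sum>j<m. x j * p j)" by (simp add: sum_distrib_left)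
      have e4: "(\<Sum>j<m. \<Sum>k<m. x k * p k) = real m * (\<Sum>j<m. x j * p j)" by (simp add: sum_distrib_left)
      show ?thesis using e1 e2 e3 e4 by (simp add: sum.distrib sum_subtractf)
    qed
    also have "\<dots> = 2 * real m * (\<Sum>j<m. x j * (p j - 1 / real m))"
    proof -
      have "(\<Sum>j<m. x j * (p j - 1 / real m)) = (\<Sum>j<m. x j * p j) - (\<Sum>j<m. x j) / real m"
        by (simp add: right_diff_distrib sum_subtractf sum_divide_distrib)
      thus ?thesis using m sp by (simp add: field_simps)
    qed
    finally show ?thesis .
  qed
  have B: "(\<Sum>j<m. \<Sum>k<m. (p j - p k)^2) = 2 * real m * (\<Sum>j<m. (p j - 1 / real m)^2)"
  proof -
    have "(\<Sum>j<m. \<Sum>k<m. (p j - p k)^2) = (\<Sum>j<m. \<Sum>k<m. p j * p j - 2 * p j * p k + p k * p k)"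
      by (simp add: algebra_simps power2_eq_square)
    also have "\<dots> = 2 * real m * (\<Sum>j<m. p j * p j) - 2 * (\<Sum>j<m. p j) * (\<Sum>j<m. p j)"
      by (simp add: sum.distrib sum_subtractf sum_distrib_left sum_distrib_right algebra_simps)
    also have "\<dots> = 2 * real m * (\<Sum>j<m. (p j - 1 / real m)^2)"
    proof -
      have "(\<Sum>j<m. (p j - 1 / real m)^2) = (\<Sum>j<m. p j * p j - 2 * p j / real m + 1 / (real m)^2)"
        by (simp add: power2_eq_square algebra_simps)
      also have "\<dots> = (\<Sum>j<m. p j * p j) - 2 * (\<Sum>j<m. p j) / real m + real m / (real m)^2"
        by (simp add: sum.distrib sum_subtractf sum_divide_distrib sum_distrib_left)
      finally show ?thesis using m sp by (simp add: field_simps power2_eq_square)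
    qed
    finally show ?thesis .
  qed
  have "(\<Sum>j<m. \<Sum>k<m. (x j - x k) * (p j - p k)) \<ge> (\<Sum>j<m. \<Sum>k<m. 2 * (p j - p k)^2)"
    by (intro sum_mono) (use pw in auto)
  hence "2 * real m * (\<Sum>j<m. x j * (p j - 1 / real m)) \<ge> 2 * (2 * real m * (\<Sum>j<m. (p j - 1 / real m)^2))"
    unfolding A B[symmetric] by (simp add: sum_distrib_left)
  thus ?thesis using m by simp
qed


lemma pair_ineq:
  fixes a b S :: real
  assumes S: "S \<ge> exp a + exp b"
  shows "(a - b) * (exp a / S - exp b / S) \<ge> 2 * (exp a / S - exp b / S)^2"
proof -
  have Sp: "S > 0" using S by (smt (verit) exp_gt_zero)
  have mono: "(a - b) * (exp a - exp b) \<ge> 0"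
    by (cases "a \<le> b") (auto intro: mult_nonpos_nonpos mult_nonneg_nonneg)
  have "(a - b) * (exp a - exp b) * S \<ge> (a - b) * (exp a - exp b) * (exp a + exp b)"
    using mono S by (intro mult_left_mono) auto
  hence "(a - b) * (exp a - exp b) * S \<ge> 2 * (exp a - exp b)^2" using key2[of a b] by linarith
  hence "(a - b) * (exp a - exp b) * S / S^2 \<ge> 2 * (exp a - exp b)^2 / S^2"
    using Sp by (intro divide_right_mono) auto
  moreover have "(a - b) * (exp a - exp b) * S / S^2 = (a - b) * (exp a / S - exp b / S)"
    using Sp by (simp add: field_simps power2_eq_square)
  moreover have "2 * (exp a - exp b)^2 / S^2 = 2 * (exp a / S - exp b / S)^2"
    using Sp by (simp add: field_simps power2_eq_square)
  ultimately show ?thesis by simp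
qed

lemma row_softmax:
  fixes m :: nat and s :: "nat \<Rightarrow> nat \<Rightarrow> real"
  assumes m: "m > 0"
  shows "(\<Sum>j<m. s i j * fbar m s i j) \<ge> 2 * (\<Sum>j<m. (fbar m s i j)^2)"
proof -
  define S where "S = (\<Sum>l<m. exp (s i l))"
  have p: "softmax m s i j = exp (s i j) / S" for j unfolding softmax_def S_def by simp
  have Sp: "S > 0" unfolding S_def using m by (intro sum_pos) auto
  have sp: "(\<Sum>j<m. softmax m s i j) = 1"
    unfolding p using Sp by (simp add: sum_divide_distrib[symmetric] S_def)
  have pw: "(s i j - s i k) * (softmax m s i j - softmax m s i k) \<ge> 2 * (softmax m s i j - softmax m s i k)^2"
    if "j < m" "k < m" for j k
  proof (cases "j = k")
    case True thus ?thesis by simp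
  next
    case False
    have "(\<Sum>l\<in>{j,k}. exp (s i l)) \<le> S"
      unfolding S_def using that by (intro sum_mono2) auto
    hence "S \<ge> exp (s i j) + exp (s i k)" using False by simp
    thus ?thesis unfolding p by (rule pair_ineq)
  qed
  show ?thesis unfolding fbar_def using row[OF m sp pw] by simp
qed

theorem lemma1:
  fixes n m :: nat and s :: "nat \<Rightarrow> nat \<Rightarrow> real"
  assumes "n \<ge> 1" and "m \<ge> 2"
  shows "(\<Sum>i<n. \<Sum>j<m. s i j * fbar m s i j) \<ge> 2 * (\<Sum>i<n. \<Sum>j<m. (fbar m s i j)^2)
       \<and> 2 * (\<Sum>i<n. \<Sum>j<m. (fbar m s i j)^2) \<ge> 0"
proof
  have m: "m > 0" using assms by simp
  have "(\<Sum>i<n. 2 * (\<Sum>j<m. (fbar m s i j)^2)) \<le> (\<Sum>i<n. \<Sum>j<m. s i j * fbar m s i j)"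
    by (intro sum_mono row_softmax[OF m])
  thus "(\<Sum>i<n. \<Sum>j<m. s i j * fbar m s i j) \<ge> 2 * (\<Sum>i<n. \<Sum>j<m. (fbar m s i j)^2)"
    by (simp add: sum_distrib_left)
  show "2 * (\<Sum>i<n. \<Sum>j<m. (fbar m s i j)^2) \<ge> 0"
    by (simp add: sum_nonneg)
qed

end
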